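(* Let a target $T$ be fixed at an unknown point $(x_T,y_T)\in\mathbb{R}^2$, and consider a UAV with planar unicycle dynamics $\dot x=V\cos\psi$, $\dot y=V\sin\psi$, $\dot\psi=\omega$, where $V>0$ is a constant speed. Let $r(t)=\sqrt{(x(t)-x_T)^2+(y(t)-y_T)^2}$ be the range, and let the control input be $$\omega=\begin{cases} k\left[V\cos\!\left(\pi-\sin^{-1}\!\left(\frac{r_a}{r(t)}\right)\right)-\dot r(t)\right], & r(t)\ge r_a,\\ 0,&\text{otherwise},\end{cases}$$ where $k\neq 0$ is a constant gain and $r_a\ge 0$ is a constant parameter. If a stable circular motion exists for the closed-loop system, then its radius is $r^\star=\sqrt{r_a^2+\frac{1}{k^2}}$. Moreover, in that motion the UAV rotates clockwise if $k>0$ and counterclockwise if $k<0$.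
   Context: A stable circular motion means that the UAV moves around the target $T$ with a constant speed and at a constant distance (radius) $r$ from $T$. $\sin^{-1}$ denotes the principal branch of arcsine with values in $[-\pi/2,\pi/2]$. *)

theory Defs
  imports "HOL-Analysis.Analysis"
begin

definition range_to :: "real \<Rightarrow> real \<Rightarrow> real \<Rightarrow> real \<Rightarrow> real" where
  "range_to xT yT px py = sqrt ((px - xT)^2 + (py - yT)^2)"

definition guidance :: "real \<Rightarrow> real \<Rightarrow> real \<Rightarrow> real \<Rightarrow> real \<Rightarrow> real" where
  "guidance k V ra r rdot =
     (if r \<ge> ra then k * (V * cos (pi - arcsin (ra / r)) - rdot) else 0)"

end

theory Submission
  imports Defs
begin

lemma lag_aux: "(a*(V*p) - b*(V*q::real))^2 + (V*(a*q+b*p))^2 = V^2*(a^2+b^2)*(p^2+q^2)"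
  by (simp add: power2_eq_square algebra_simps)

lemma key_aux: "V * (V * c * c + (x - xT) * (- sn * w) + (V * sn * sn + (y - yT) * (c * w)))
        = V*V*(c*c+sn * sn) - w * ((x - xT) * (V * sn) - (y - yT) * (V * c))" for V :: real
  by (simp add: algebra_simps)

theorem lemma1:
  fixes x y psi :: "real \<Rightarrow> real" and xT yT V k ra :: real
  assumes V_pos: "V > 0" and k_nz: "k \<noteq> 0" and ra_nonneg: "ra \<ge> 0"
    and dx: "\<And>t. (x has_real_derivative V * cos (psi t)) (at t)"
    and dy: "\<And>t. (y has_real_derivative V * sin (psi t)) (at t)"
    and dpsi: "\<And>t. (psi has_real_derivative
                 guidance k V ra (range_to xT yT (x t) (y t))
                   (deriv (\<lambda>s. range_to xT yT (x s) (y s)) t)) (at t)"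
    and circ: "\<And>t. range_to xT yT (x t) (y t) = R"
  shows "R = sqrt (ra^2 + 1 / k^2)
    \<and> (k > 0 \<longrightarrow> (\<forall>t. (x t - xT) * (V * sin (psi t)) - (y t - yT) * (V * cos (psi t)) < 0
                      \<and> deriv psi t < 0))
    \<and> (k < 0 \<longrightarrow> (\<forall>t. (x t - xT) * (V * sin (psi t)) - (y t - yT) * (V * cos (psi t)) > 0
                      \<and> deriv psi t > 0))"
proof -
  define w where "w = guidance k V ra R 0"
  have rfun: "(\<lambda>s. range_to xT yT (x s) (y s)) = (\<lambda>s. R)" using circ by auto
  have dps: "\<And>t. (psi has_real_derivative w) (at t)"
    using dpsi[unfolded rfun] circ by (simp add: w_def)
  have Rge: "R \<ge> 0" using circ[of 0] unfolding range_to_def by (metis real_sqrt_ge_zero add_nonneg_nonneg zero_le_power2)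
  have sq: "\<And>t. (x t - xT)^2 + (y t - yT)^2 = R^2"
    using circ unfolding range_to_def by (metis add_nonneg_nonneg real_sqrt_pow2 zero_le_power2)
  define g where "g t = (x t - xT) * cos (psi t) + (y t - yT) * sin (psi t)" for t
  define c where "c t = (x t - xT) * (V * sin (psi t)) - (y t - yT) * (V * cos (psi t))" for t
  have g0: "g t = 0" for t
  proof -
    have d1: "((\<lambda>t. (x t - xT)^2 + (y t - yT)^2) has_real_derivative
        2 * (x t - xT) * (V * cos (psi t)) + 2 * (y t - yT) * (V * sin (psi t))) (at t)"
      by (auto intro!: derivative_eq_intros dx dy simp: algebra_simps)
    have d2: "((\<lambda>t. (x t - xT)^2 + (y t - yT)^2) has_real_derivative 0) (at t)"
      using sq by simp
    have "2 * (x t - xT) * (V * cos (psi t)) + 2 * (y t - yT) * (V * sin (psi t)) = 0"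
      using DERIV_unique[OF d1 d2] .
    then have "2 * V * g t = 0" unfolding g_def by (simp add: algebra_simps)
    then show ?thesis using V_pos by simp
  qed
  have key: "V^2 = w * c t" for t
  proof -
    have d1: "(g has_real_derivative
        V * cos (psi t) * cos (psi t) + (x t - xT) * (- sin (psi t) * w)
        + (V * sin (psi t) * sin (psi t) + (y t - yT) * (cos (psi t) * w))) (at t)"
      unfolding g_def by (auto intro!: derivative_eq_intros dx dy dps)
    have d2: "(g has_real_derivative 0) (at t)" using g0
      by (metis DERIV_const ext)
    have e: "V * cos (psi t) * cos (psi t) + (x t - xT) * (- sin (psi t) * w)
        + (V * sin (psi t) * sin (psi t) + (y t - yT) * (cos (psi t) * w)) = 0"
      using DERIV_unique[OF d1 d2] .
    have s: "cos (psi t) * cos (psi t) + sin (psi t) * sin (psi t) = 1"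
      by (metis sin_cos_squared_add3 add.commute)
    have "V * (V * cos (psi t) * cos (psi t) + (x t - xT) * (- sin (psi t) * w)
        + (V * sin (psi t) * sin (psi t) + (y t - yT) * (cos (psi t) * w)))
        = V*V*(cos (psi t) * cos (psi t) + sin (psi t) * sin (psi t)) - w * c t"
      unfolding c_def by (rule key_aux)
    with e s show ?thesis by (simp add: power2_eq_square)
  qed
  have wnz: "w \<noteq> 0" using key[of 0] V_pos by auto
  have c_eq: "c t = V^2 / w" for t using key[of t] wnz by (simp add: field_simps)
  have lag: "(c t)^2 + (V * g t)^2 = V^2 * R^2" for t
  proof -
    have "(c t)^2 + (V * g t)^2 = V^2 * ((x t - xT)^2 + (y t - yT)^2) * (sin (psi t)^2 + cos (psi t)^2)"
      unfolding c_def g_def by (rule lag_aux)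
    then show ?thesis using sq[of t] by simp
  qed
  have cR: "(V^2 / w)^2 = V^2 * R^2" using lag[of 0] g0[of 0] c_eq[of 0] by simp
  have R_pos: "R > 0"
  proof (rule ccontr)
    assume "\<not> R > 0" then have "R = 0" using Rge by simp
    with cR wnz V_pos show False by simp
  qed
  have Rra: "R \<ge> ra" using wnz unfolding w_def guidance_def by (auto split: if_splits)
  have q: "0 \<le> ra / R" "ra / R \<le> 1" using R_pos Rra ra_nonneg by auto
  have w_eq: "w = - k * V * sqrt (1 - (ra/R)^2)"
    using Rra q unfolding w_def guidance_def by (simp add: cos_arcsin)
  have sqpos: "sqrt (1 - (ra/R)^2) > 0" using wnz w_eq
  proof -
    have "sqrt (1 - (ra/R)^2) \<noteq> 0" using wnz w_eq by auto
    moreover have "(ra/R)^2 \<le> 1" using q by (simp add: power_le_one)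
    ultimately show ?thesis by simp
  qed
  have w2: "w^2 = k^2 * V^2 * (1 - (ra/R)^2)"
  proof -
    have "(ra/R)^2 \<le> 1" using q by (simp add: power_le_one)
    then show ?thesis using w_eq by (simp add: power_mult_distrib)
  qed
  have "V^2 = w^2 * R^2"
  proof -
    have "(V^2)^2 = (V^2 * R^2) * w^2" using cR wnz by (simp add: power_divide divide_eq_eq)
    then have "V^2 * V^2 = V^2 * (w^2 * R^2)" by (simp add: power2_eq_square[of "V^2"] mult.commute mult.left_commute)
    moreover have "V^2 \<noteq> 0" using V_pos by simp
    ultimately show ?thesis by (metis mult_left_cancel)
  qed
  also have "\<dots> = k^2 * V^2 * (R^2 - ra^2)" using w2 R_pos by (simp add: field_simps power_divide)
  finally have "1 = k^2 * (R^2 - ra^2)" using V_pos by simp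
  then have "R^2 = ra^2 + 1/k^2" using k_nz by (simp add: field_simps)
  then have R1: "R = sqrt (ra^2 + 1/k^2)" using Rge by (simp add: real_sqrt_unique)
  have dpsi_eq: "deriv psi t = w" for t using dps DERIV_imp_deriv by blast
  have kp: "k > 0 \<Longrightarrow> w < 0" using w_eq sqpos V_pos by (simp add: mult_pos_pos)
  have kn: "k < 0 \<Longrightarrow> w > 0" using w_eq sqpos V_pos by (simp add: mult_neg_pos mult_pos_pos)
  show ?thesis
    using R1 kp kn c_eq dpsi_eq V_pos unfolding c_def
    by (auto simp: divide_pos_neg)
qed

end
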